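(* Assume $\mathfrak p=\mathfrak p_1\oplus\mathfrak p_2$ with $\mathfrak p_1,\mathfrak p_2$ $\mathrm{Ad}(K)$-irreducible and inequivalent, that $g_B$ is Einstein, $d_1=d_2$, $[111]=[222]$ and $[112]=[122]>0$. Then $g_B$ is a global maximum of $\mathrm{scal}|_{\mathcal M_1^G}$ if and only if $g_B$ is the unique $G$-invariant Einstein metric on $G/K$ up to scaling. Otherwise $g_B$ is a local minimum of $\mathrm{scal}|_{\mathcal M_1^G}$ and there exist exactly two other unit-volume $G$-invariant Einstein metrics, both local maxima of $\mathrm{scal}|_{\mathcal M_1^G}$, at least one of them a global maximum.
   Context: Let $G$ be a compact connected semisimple Lie group with Lie algebra $\mathfrak g$ and Killing form $B$, $K\subset G$ a closed subgroup with Lie algebra $\mathfrak k$, $\mathfrak p$ the $B$-orthogonal complement of $\mathfrak k$, and $g_B$ the standard metric on $G/K$, given on $\mathfrak p$ by $\langle\cdot,\cdot\rangle=-B|_{\mathfrak p\times\mathfrak p}$. For a $\langle\cdot,\cdot\rangle$-orthogonal decomposition $\mathfrak p=\mathfrak p_1\oplus\dots\oplus\mathfrak p_r$ into $\mathrm{Ad}(K)$-invariant subspaces with $d_i=\dim\mathfrak p_i$, the structural constants are $[ijk]=\sum_{\alpha,\beta,\gamma}\langle[X^i_\alpha,X^j_\beta],X^k_\gamma\rangle^2$, where $\{X^i_\alpha\}$ is an orthonormal basis of $\mathfrak p_i$; they are symmetric in $i,j,k$. When $\mathfrak p=\mathfrak p_1\oplus\mathfrak p_2$ with inequivalent irreducible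 summands, every $G$-invariant metric is of the form $x_1\langle\cdot,\cdot\rangle|_{\mathfrak p_1}+x_2\langle\cdot,\cdot\rangle|_{\mathfrak p_2}$ with $x_1,x_2>0$. $\mathcal M_1^G$ denotes the set of unit-volume $G$-invariant metrics (volume normalized as that of $g_B$) and $\mathrm{scal}$ the scalar curvature function on it; its critical points are exactly the $G$-invariant Einstein metrics. *)

theory Defs
  imports "HOL-Analysis.Analysis"
begin

text \<open>A G-invariant metric x1 <.,.>|p1 + x2 <.,.>|p2 is encoded by the pair (x1, x2);
  the standard metric g_B is (1, 1). Summand indices are 1 and 2.
  The structure constants [ijk] are a function c :: nat => nat => nat => real,
  and the dimensions d_i a function d :: nat => nat.\<close>

definition comp :: "real \<times> real \<Rightarrow> nat \<Rightarrow> real" where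
  "comp x i = (if i = 1 then fst x else snd x)"

text \<open>Scalar curvature of a G-invariant metric (Wang-Ziller formula, normalised by -B):
  scal = 1/2 sum_i d_i / x_i - 1/4 sum_{i,j,k} [ijk] x_k / (x_i x_j).\<close>
definition scal :: "(nat \<Rightarrow> nat \<Rightarrow> nat \<Rightarrow> real) \<Rightarrow> (nat \<Rightarrow> nat) \<Rightarrow> real \<times> real \<Rightarrow> real" where
  "scal c d x =
     1/2 * (\<Sum>i\<in>{1,2}. real (d i) / comp x i)
     - 1/4 * (\<Sum>i\<in>{1,2}. \<Sum>j\<in>{1,2}. \<Sum>k\<in>{1,2}. c i j k * comp x k / (comp x i * comp x j))"

text \<open>Unit-volume G-invariant metrics (volume normalised as that of g_B).\<close>
definition M1 :: "(nat \<Rightarrow> nat) \<Rightarrow> (real \<times> real) set" where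
  "M1 d = {x. fst x > 0 \<and> snd x > 0 \<and> fst x ^ d 1 * snd x ^ d 2 = 1}"

text \<open>Critical points of scal restricted to M1 (= unit-volume G-invariant Einstein metrics).\<close>
definition crit_point :: "(nat \<Rightarrow> nat \<Rightarrow> nat \<Rightarrow> real) \<Rightarrow> (nat \<Rightarrow> nat) \<Rightarrow> real \<times> real \<Rightarrow> bool" where
  "crit_point c d p \<longleftrightarrow> p \<in> M1 d \<and>
     (\<forall>\<gamma> :: real \<Rightarrow> real \<times> real. \<gamma> 0 = p \<and> (\<forall>t. \<gamma> t \<in> M1 d) \<and> \<gamma> differentiable (at 0)
        \<longrightarrow> ((\<lambda>t. scal c d (\<gamma> t)) has_real_derivative 0) (at 0))"

definition global_max_M1 :: "(nat \<Rightarrow> nat \<Rightarrow> nat \<Rightarrow> real) \<Rightarrow> (nat \<Rightarrow> nat) \<Rightarrow> real \<times> real \<Rightarrow> bool" where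
  "global_max_M1 c d p \<longleftrightarrow> p \<in> M1 d \<and> (\<forall>q\<in>M1 d. scal c d q \<le> scal c d p)"

definition local_max_M1 :: "(nat \<Rightarrow> nat \<Rightarrow> nat \<Rightarrow> real) \<Rightarrow> (nat \<Rightarrow> nat) \<Rightarrow> real \<times> real \<Rightarrow> bool" where
  "local_max_M1 c d p \<longleftrightarrow> p \<in> M1 d \<and>
     (\<exists>e>0. \<forall>q\<in>M1 d. dist q p < e \<longrightarrow> scal c d q \<le> scal c d p)"

definition local_min_M1 :: "(nat \<Rightarrow> nat \<Rightarrow> nat \<Rightarrow> real) \<Rightarrow> (nat \<Rightarrow> nat) \<Rightarrow> real \<times> real \<Rightarrow> bool" where
  "local_min_M1 c d p \<longleftrightarrow> p \<in> M1 d \<and>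
     (\<exists>e>0. \<forall>q\<in>M1 d. dist q p < e \<longrightarrow> scal c d p \<le> scal c d q)"

end

theory Submission imports Defs begin

lemma scal_eq:
  fixes c :: "nat \<Rightarrow> nat \<Rightarrow> nat \<Rightarrow> real" and d :: "nat \<Rightarrow> nat"
  assumes csym: "\<And>i j k. i \<in> {1,2} \<Longrightarrow> j \<in> {1,2} \<Longrightarrow> k \<in> {1,2} \<Longrightarrow>
                  c i j k = c j i k \<and> c i j k = c i k j"
    and deq: "d 1 = d 2"
    and c111: "c 1 1 1 = c 2 2 2"
    and c112: "c 1 1 2 = c 1 2 2"
    and t: "t \<noteq> 0"
  shows "scal c d (t, 1/t) = (real (d 1)/2 - c 1 1 1/4 + c 1 1 2/4) * (t + 1/t) - c 1 1 2/4 * (t+1/t)^3"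
proof -
  have e1: "c 1 2 1 = c 1 1 2" "c 2 1 1 = c 1 1 2" "c 2 1 2 = c 1 1 2" "c 2 2 1 = c 1 1 2"
    using csym[of 1 1 2] csym[of 1 2 1] csym[of 2 1 2] csym[of 2 2 1] csym[of 1 2 2] c112 by auto
  have ex: "scal c d (t, 1/t) = 1/2 * (real (d 1) / t + real (d 2) * t)
     - 1/4 * (c 1 1 1 * t / (t*t) + c 1 1 2 * (1/t) / (t*t) + c 1 2 1 * t / (t*(1/t)) + c 1 2 2 * (1/t) / (t * (1/t))
       + c 2 1 1 * t / ((1/t)*t) + c 2 1 2 * (1/t) / ((1/t)*t) + c 2 2 1 * t / ((1/t)*(1/t)) + c 2 2 2 * (1/t) / ((1/t)*(1/t)))"
    unfolding scal_def comp_def by (simp add: algebra_simps)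
  show ?thesis
    unfolding ex e1 deq[symmetric] c111[symmetric] c112[symmetric] using t
    by (simp add: field_simps power3_eq_cube)
qed

lemma M1_iff:
  assumes "d 1 > 0" "d 1 = d 2"
  shows "x \<in> M1 d \<longleftrightarrow> fst x > 0 \<and> snd x = 1 / fst x"
proof
  assume x: "x \<in> M1 d"
  hence p: "fst x > 0" "snd x > 0" and e: "(fst x * snd x) ^ d 1 = 1"
    using assms by (auto simp: M1_def power_mult_distrib)
  have "fst x * snd x = 1"
    using power_eq_imp_eq_base[of "fst x * snd x" "d 1" 1] e p assms by simp
  thus "fst x > 0 \<and> snd x = 1 / fst x" using p by (simp add: field_simps)
next
  assume "fst x > 0 \<and> snd x = 1 / fst x"
  thus "x \<in> M1 d" using assms unfolding M1_def
    by (simp add: power_mult_distrib[symmetric])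
qed

lemma F_deriv:
  assumes "t \<noteq> 0"
  shows "((\<lambda>t. C * (t + 1/t) - b/4 * (t+1/t)^3) has_real_derivative
     (C - 3*b/4 * (t+1/t)^2) * (1 - 1/t^2)) (at t)"
  using assms
  apply (auto intro!: derivative_eq_intros)
  apply (simp add: field_simps power2_eq_square power3_eq_cube)
  done

lemma crit_iff:
  fixes c :: "nat \<Rightarrow> nat \<Rightarrow> nat \<Rightarrow> real" and d :: "nat \<Rightarrow> nat"
  assumes dpos: "d 1 > 0"
    and csym: "\<And>i j k. i \<in> {1,2} \<Longrightarrow> j \<in> {1,2} \<Longrightarrow> k \<in> {1,2} \<Longrightarrow>
                  c i j k = c j i k \<and> c i j k = c i k j"
    and deq: "d 1 = d 2"
    and c111: "c 1 1 1 = c 2 2 2"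
    and c112: "c 1 1 2 = c 1 2 2"
    and Cdef: "C = real (d 1)/2 - c 1 1 1/4 + c 1 1 2/4" and bdef: "b = c 1 1 2"
  shows "crit_point c d p \<longleftrightarrow> (\<exists>t>0. p = (t, 1/t) \<and> (C - 3*b/4 * (t+1/t)^2) * (1 - 1/t^2) = 0)"
proof -
  define G where "G = (\<lambda>t::real. C * (t + 1/t) - b/4 * (t+1/t)^3)"
  have sG: "scal c d (x, 1/x) = G x" if "x \<noteq> 0" for x
    using scal_eq[OF csym deq c111 c112 that] unfolding G_def Cdef bdef by simp
  have dG: "(G has_real_derivative (C - 3*b/4 * (x+1/x)^2) * (1 - 1/x^2)) (at x)" if "x \<noteq> 0" for x
    unfolding G_def using F_deriv[OF that] .
  have M1: "x \<in> M1 d \<longleftrightarrow> fst x > 0 \<and> snd x = 1 / fst x" for x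
    using M1_iff[OF dpos deq] .
  show ?thesis
  proof
    assume cp: "crit_point c d p"
    hence pM: "p \<in> M1 d" unfolding crit_point_def by blast
    define t where "t = fst p"
    have t0: "t > 0" and pe: "p = (t, 1/t)" using pM M1[of p] unfolding t_def by (auto simp: prod_eq_iff)
    define \<gamma> where "\<gamma> = (\<lambda>u::real. (t * exp u, 1 / (t * exp u)))"
    have g0: "\<gamma> 0 = p" using pe unfolding \<gamma>_def by simp
    have gM: "\<gamma> u \<in> M1 d" for u using M1 t0 unfolding \<gamma>_def by simp
    have d1: "(\<lambda>u. t * exp u) differentiable at 0"
    proof -
      have "((\<lambda>u. t * exp u) has_real_derivative t) (at 0)"
        using DERIV_cmult[OF DERIV_exp[of 0], of t] by simp
      thus ?thesis unfolding real_differentiable_def by blast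
    qed
    have d2: "(\<lambda>u. 1 / (t * exp u)) differentiable at 0"
    proof -
      have "((\<lambda>u. 1 / (t * exp u)) has_real_derivative (- 1 / t)) (at 0)"
        using t0 by (auto intro!: derivative_eq_intros simp: field_simps)
      thus ?thesis unfolding real_differentiable_def by blast
    qed
    have gd: "\<gamma> differentiable at 0" unfolding \<gamma>_def by (rule differentiable_Pair[OF d1 d2])
    have z: "((\<lambda>u. scal c d (\<gamma> u)) has_real_derivative 0) (at 0)"
      using cp g0 gM gd unfolding crit_point_def by blast
    have eq: "(\<lambda>u. scal c d (\<gamma> u)) = (\<lambda>u. G (t * exp u))"
      unfolding \<gamma>_def using t0 by (intro ext sG) simp
    have "((\<lambda>u. G (t * exp u)) has_real_derivative (C - 3*b/4 * (t+1/t)^2) * (1 - 1/t^2) * t) (at 0)"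
    proof -
      have e: "((\<lambda>u. t * exp u) has_real_derivative t) (at 0)"
        using DERIV_cmult[OF DERIV_exp[of 0], of t] by simp
      have dG': "(G has_real_derivative (C - 3*b/4 * (t+1/t)^2) * (1 - 1/t^2)) (at (t * exp 0))"
        using dG[of t] t0 by simp
      show ?thesis by (rule DERIV_chain2[OF dG' e])
    qed
    hence "((\<lambda>u. scal c d (\<gamma> u)) has_real_derivative (C - 3*b/4 * (t+1/t)^2) * (1 - 1/t^2) * t) (at 0)"
      unfolding eq .
    hence "(C - 3*b/4 * (t+1/t)^2) * (1 - 1/t^2) * t = 0"
      using DERIV_unique[OF _ z] by blast
    with t0 pe show "\<exists>t>0. p = (t, 1/t) \<and> (C - 3*b/4 * (t+1/t)^2) * (1 - 1/t^2) = 0" by auto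
  next
    assume "\<exists>t>0. p = (t, 1/t) \<and> (C - 3*b/4 * (t+1/t)^2) * (1 - 1/t^2) = 0"
    then obtain t where t0: "t > 0" and pe: "p = (t, 1/t)" and D0: "(C - 3*b/4 * (t+1/t)^2) * (1 - 1/t^2) = 0" by blast
    have pM: "p \<in> M1 d" using M1 pe t0 by simp
    show "crit_point c d p" unfolding crit_point_def
    proof (intro conjI pM allI impI)
      fix \<gamma> :: "real \<Rightarrow> real \<times> real"
      assume a: "\<gamma> 0 = p \<and> (\<forall>t. \<gamma> t \<in> M1 d) \<and> \<gamma> differentiable at 0"
      define h where "h = (\<lambda>u. fst (\<gamma> u))"
      have hd: "h differentiable at 0" unfolding h_def
        using a by (auto intro: differentiable_compose[where f=fst, OF bounded_linear_imp_differentiable[OF bounded_linear_fst]])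
      then obtain h' where h': "(h has_real_derivative h') (at 0)"
        using DERIV_deriv_iff_real_differentiable by blast
      have h0: "h 0 = t" using a pe unfolding h_def by simp
      have eq: "(\<lambda>u. scal c d (\<gamma> u)) = (\<lambda>u. G (h u))"
      proof
        fix u
        have "\<gamma> u \<in> M1 d" using a by blast
        hence "fst (\<gamma> u) > 0" "\<gamma> u = (fst (\<gamma> u), 1 / fst (\<gamma> u))" using M1 by (auto simp: prod_eq_iff)
        thus "scal c d (\<gamma> u) = G (h u)" unfolding h_def using sG[of "fst (\<gamma> u)"] by simp
      qed
      have "((\<lambda>u. G (h u)) has_real_derivative (C - 3*b/4 * (t+1/t)^2) * (1 - 1/t^2) * h') (at 0)"
        using DERIV_chain2[OF dG[of t, folded h0] h'] t0 h0 by simp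
      thus "((\<lambda>u. scal c d (\<gamma> u)) has_real_derivative 0) (at 0)" unfolding eq using D0 by (metis mult_zero_left)
    qed
  qed
qed

theorem lemma6p2:
  fixes c :: "nat \<Rightarrow> nat \<Rightarrow> nat \<Rightarrow> real" and d :: "nat \<Rightarrow> nat"
  assumes dpos: "d 1 > 0" "d 2 > 0"
    and cnonneg: "\<And>i j k. c i j k \<ge> 0"
    and csym: "\<And>i j k. i \<in> {1,2} \<Longrightarrow> j \<in> {1,2} \<Longrightarrow> k \<in> {1,2} \<Longrightarrow>
                  c i j k = c j i k \<and> c i j k = c i k j"
    and einstein_gB: "crit_point c d (1, 1)"
    and deq: "d 1 = d 2"
    and c111: "c 1 1 1 = c 2 2 2"
    and c112: "c 1 1 2 = c 1 2 2" "c 1 1 2 > 0"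
  shows "(global_max_M1 c d (1, 1) \<longleftrightarrow> {p. crit_point c d p} = {(1, 1)})
       \<and> (\<not> global_max_M1 c d (1, 1) \<longrightarrow>
            local_min_M1 c d (1, 1) \<and>
            (\<exists>g1 g2. g1 \<noteq> g2 \<and> g1 \<noteq> (1, 1) \<and> g2 \<noteq> (1, 1) \<and>
               {p. crit_point c d p} = {(1, 1), g1, g2} \<and>
               local_max_M1 c d g1 \<and> local_max_M1 c d g2 \<and>
               (global_max_M1 c d g1 \<or> global_max_M1 c d g2)))"
proof -
  define n where "n = real (d 1)"
  define a where "a = c 1 1 1"
  define b where "b = c 1 1 2"
  define C where "C = n/2 - a/4 + b/4"
  define F where "F = (\<lambda>s::real. C * s - b/4 * s^3)"
  have b0: "b > 0" using c112 unfolding b_def by simp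
  have M1: "x \<in> M1 d \<longleftrightarrow> fst x > 0 \<and> snd x = 1 / fst x" for x
    using M1_iff[OF dpos(1) deq] .
  have M1e: "x \<in> M1 d \<Longrightarrow> fst x > 0 \<and> x = (fst x, 1 / fst x)" for x
    using M1 by (auto simp: prod_eq_iff)
  have sc: "scal c d (t, 1/t) = F (t + 1/t)" if "t > 0" for t
    using scal_eq[OF csym deq c111 c112(1), of t] that unfolding F_def C_def n_def a_def b_def by simp
  have scq: "scal c d q = F (fst q + 1/fst q)" if "q \<in> M1 d" for q
  proof -
    have f: "fst q > 0" and sn: "snd q = 1/fst q" using M1 that by auto
    have "scal c d q = scal c d (fst q, snd q)" by simp
    also have "\<dots> = scal c d (fst q, 1/fst q)" unfolding sn ..
    also have "\<dots> = F (fst q + 1/fst q)" by (rule sc[OF f])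
    finally show ?thesis .
  qed
  have cr: "crit_point c d p \<longleftrightarrow> (\<exists>t>0. p = (t, 1/t) \<and> (C - 3*b/4 * (t+1/t)^2) * (1 - 1/t^2) = 0)" for p
    by (rule crit_iff[OF dpos(1) csym deq c111 c112(1)]) (simp_all add: C_def n_def a_def b_def)
  have s2e: "t + 1/t - 2 = (t-1)^2/t" if "t > 0" for t :: real
    using that by (simp add: field_simps power2_eq_square)
  have s2: "t + 1/t \<ge> 2" if "t > 0" for t :: real
  proof -
    have "(t-1)^2/t \<ge> 0" using that by simp
    thus ?thesis using s2e[OF that] by linarith
  qed
  have s2s: "t + 1/t > 2" if "t > 0" "t \<noteq> 1" for t :: real
  proof -
    have "(t-1)^2/t > 0" using that by simp
    thus ?thesis using s2e[OF that(1)] by linarith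
  qed
  have t1iff: "1 - 1/t^2 = 0 \<longleftrightarrow> t = 1" if "t > 0" for t :: real
  proof -
    have "1 - 1/t^2 = (t^2 - 1)/t^2" using that by (simp add: field_simps)
    hence "1 - 1/t^2 = 0 \<longleftrightarrow> t^2 = 1" using that by simp
    also have "\<dots> \<longleftrightarrow> t = 1" using that power2_eq_1_iff[of t] by auto
    finally show ?thesis .
  qed
  have F2: "F s - F 2 = (s-2) * (C - b/4*(s^2 + 2 * s + 4))" for s
    unfolding F_def by (simp add: field_simps power2_eq_square power3_eq_cube)
  have c11: "crit_point c d (1,1)" unfolding cr by auto
  show ?thesis
  proof (cases "C \<le> 3*b")
    case True
    have crit: "{p. crit_point c d p} = {(1,1)}"
    proof -
      have "p = (1,1)" if "crit_point c d p" for p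
      proof -
      from that obtain t where t: "t > 0" "p = (t, 1/t)" and D: "(C - 3*b/4 * (t+1/t)^2) * (1 - 1/t^2) = 0"
        unfolding cr by blast
      show "p = (1,1)"
      proof (rule ccontr)
        assume "p \<noteq> (1,1)"
        hence t1: "t \<noteq> 1" using t by auto
        have "t + 1/t > 2" using s2s[OF t(1) t1] .
        hence "(t+1/t)^2 > 2^2" by (intro power_strict_mono) auto
        hence "3*b/4 * (t+1/t)^2 > 3*b/4 * 4" using b0 by (intro mult_strict_left_mono) auto
        hence "C - 3*b/4 * (t+1/t)^2 \<noteq> 0" using True by auto
        moreover have "1 - 1/t^2 \<noteq> 0" using t1iff[OF t(1)] t1 by simp
        ultimately show False using D by simp
      qed
      qed
      thus ?thesis using c11 by blast
    qed
    have gm: "global_max_M1 c d (1,1)"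
      unfolding global_max_M1_def
    proof (intro conjI ballI)
      show "(1,1) \<in> M1 d" using M1 by simp
      fix q assume "q \<in> M1 d"
      hence q: "fst q > 0" and qsc: "scal c d q = F (fst q + 1/fst q)" using M1 scq by auto
      define s where "s = fst q + 1/fst q"
      have s2': "s \<ge> 2" using s2[OF q(1)] unfolding s_def .
      have "s^2 \<ge> 2^2" using s2' by (intro power_mono) auto
      hence "s^2 + 2 * s + 4 \<ge> 12" using s2' by simp
      hence "b/4*(s^2 + 2 * s + 4) \<ge> b/4*12" using b0 by (intro mult_left_mono) auto
      hence "C - b/4*(s^2 + 2 * s + 4) \<le> 0" using True by simp
      hence "F s - F 2 \<le> 0" unfolding F2 using s2' by (simp add: mult_nonneg_nonpos)
      moreover have "scal c d q = F s" using qsc unfolding s_def .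
      moreover have "scal c d (1,1) = F 2" using sc[of 1] by simp
      ultimately show "scal c d q \<le> scal c d (1,1)" by simp
    qed
    show ?thesis using crit gm by simp
  next
    case False
    define s0 where "s0 = sqrt (4*C/(3*b))"
    have "4*C/(3*b) > 4" using False b0 by (simp add: field_simps)
    hence s0g: "s0 > 2" unfolding s0_def by (metis real_sqrt_four real_sqrt_less_iff)
    have Cs0: "C = 3*b/4 * s0^2" unfolding s0_def using False b0 by simp
    define r where "r = sqrt (s0^2 - 4)"
    have "s0^2 > 2^2" using s0g by (intro power_strict_mono) auto
    hence r0: "r > 0" and r2: "r^2 = s0^2 - 4" unfolding r_def by auto
    have "r^2 < s0^2" using r2 by simp
    hence "r < s0" using power2_less_imp_less[of r s0] s0g by simp
    define t0 where "t0 = (s0 + r)/2"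
    define t1 where "t1 = (s0 - r)/2"
    have t0p: "t0 > 1" unfolding t0_def using s0g r0 by simp
    have t1p: "t1 > 0" unfolding t1_def using \<open>r < s0\<close> by simp
    have prod: "t0 * t1 = 1" unfolding t0_def t1_def using r2 by (simp add: field_simps power2_eq_square)
    have t1e: "1/t0 = t1" "1/t1 = t0" using prod t0p t1p by (auto simp: field_simps)
    have dif: "t0 - t1 = r" unfolding t0_def t1_def by (simp add: field_simps)
    have sum: "t0 + t1 = s0" unfolding t0_def t1_def by (simp add: field_simps)
    define g1 where "g1 = (t0, t1)"
    define g2 where "g2 = (t1, t0)"
    have Fmax: "F s \<le> F s0" if "s \<ge> 0" for s
    proof -
      have "F s0 - F s = b/4 * (s0 - s)^2 * (2 * s0 + s)"
        unfolding F_def Cs0 by (simp add: field_simps power2_eq_square power3_eq_cube)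
      moreover have "b/4 * (s0 - s)^2 * (2 * s0 + s) \<ge> 0" using b0 s0g that by simp
      ultimately show ?thesis by simp
    qed
    have scg1: "scal c d g1 = F s0" unfolding g1_def using sc[OF t0p[THEN less_trans[OF zero_less_one]]] t1e(1) sum by simp
    have scg2: "scal c d g2 = F s0" unfolding g2_def using sc[OF t1p] t1e sum by (simp add: add.commute)
    have g1M: "g1 \<in> M1 d" "g2 \<in> M1 d" unfolding g1_def g2_def using M1 t0p t1p t1e by auto
    have gmax: "global_max_M1 c d g" if "g \<in> {g1, g2}" for g
      unfolding global_max_M1_def
    proof (intro conjI ballI)
      show "g \<in> M1 d" using that g1M by auto
      fix q assume "q \<in> M1 d"
      hence q: "fst q > 0" and qsc: "scal c d q = F (fst q + 1/fst q)" using M1 scq by auto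
      have "scal c d q = F (fst q + 1/fst q)" by (rule qsc)
      also have "\<dots> \<le> F s0" using Fmax q(1) by simp
      finally show "scal c d q \<le> scal c d g" using that scg1 scg2 by auto
    qed
    have F2lt: "F 2 < F s0"
    proof -
      have e1: "F s0 - F 2 = (s0-2) * (C - b/4*(s0^2 + 2 * s0 + 4))" by (rule F2)
      have e2: "C - b/4*(s0^2 + 2 * s0 + 4) = b/2 * ((s0-2)*(s0+1))"
        unfolding Cs0 by (simp add: field_simps power2_eq_square)
      have p: "(s0-2) * (b/2 * ((s0-2)*(s0+1))) > 0" using s0g b0 by (intro mult_pos_pos) simp_all
      have "F s0 - F 2 > 0" unfolding e1 e2 by (rule p)
      thus ?thesis by simp
    qed
    have ngm: "\<not> global_max_M1 c d (1,1)"
    proof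
      assume "global_max_M1 c d (1,1)"
      hence "scal c d g1 \<le> scal c d (1,1)" using g1M unfolding global_max_M1_def by blast
      moreover have "scal c d (1,1) = F 2" using sc[of 1] by simp
      ultimately show False using F2lt scg1 by simp
    qed
    have crit: "{p. crit_point c d p} = {(1,1), g1, g2}"
    proof -
      have "p = g1" if "crit_point c d p" "p \<noteq> (1,1)" "p \<noteq> g2" for p
      proof -
      from that(1) obtain t where t: "t > 0" "p = (t, 1/t)" and D: "(C - 3*b/4 * (t+1/t)^2) * (1 - 1/t^2) = 0"
        unfolding cr by blast
      have tn1: "t \<noteq> 1" using t that(2) by auto
      hence "1 - 1/t^2 \<noteq> 0" using t1iff[OF t(1)] by simp
      hence "C - 3*b/4 * (t+1/t)^2 = 0" using D mult_eq_0_iff by blast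
      hence "C = 3*b/4 * (t+1/t)^2" by simp
      hence "(t+1/t)^2 = s0^2" using Cs0 b0 by simp
      moreover have "t + 1/t \<ge> 0" using s2[OF t(1)] by simp
      ultimately have "t + 1/t = s0" using s0g power2_eq_iff_nonneg[of "t+1/t" s0] by simp
      hence "t*t + 1 = s0 * t" using t(1) by (simp add: field_simps)
      moreover have "(t - t0) * (t - t1) = t*t - (t0+t1)*t + t0*t1" by (simp add: algebra_simps)
      ultimately have "(t - t0) * (t - t1) = 0" using sum prod by simp
      hence "t = t0 \<or> t = t1" by simp
      thus "p = g1" using t t1e that(3) unfolding g1_def g2_def by auto
      qed
      moreover
      have "t0 + 1/t0 = s0" using sum t1e by simp
      hence "crit_point c d g1" unfolding cr g1_def using t0p t1e Cs0
        by (intro exI[of _ t0]) auto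
      moreover have "t1 + 1/t1 = s0" using sum t1e by simp
      hence "crit_point c d g2" unfolding cr g2_def using t1p t1e Cs0
        by (intro exI[of _ t1]) auto
      ultimately show ?thesis using c11 by blast
    qed
    have lmin: "local_min_M1 c d (1,1)"
      unfolding local_min_M1_def
    proof (intro conjI)
      show "(1,1) \<in> M1 d" using M1 by simp
      show "\<exists>e>0. \<forall>q\<in>M1 d. dist q (1, 1) < e \<longrightarrow> scal c d (1, 1) \<le> scal c d q"
      proof (intro exI[of _ "(s0-2)/2"] conjI ballI impI)
        show "(s0-2)/2 > 0" using s0g by simp
        fix q assume qM: "q \<in> M1 d" and dq: "dist q (1,1) < (s0-2)/2"
        hence q: "fst q > 0" and qsn: "snd q = 1/fst q" and qsc: "scal c d q = F (fst q + 1/fst q)" using M1 scq by auto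
        define t where "t = fst q"
        have "dist (fst q) (fst (1::real,1::real)) \<le> dist q (1,1)" by (rule dist_fst_le)
        hence a1: "\<bar>t - 1\<bar> < (s0-2)/2" using dq unfolding t_def dist_real_def by simp
        have "dist (snd q) (snd (1::real,1::real)) \<le> dist q (1,1)" by (rule dist_snd_le)
        hence a2: "\<bar>1/t - 1\<bar> < (s0-2)/2" using dq qsn unfolding t_def dist_real_def by simp
        define s where "s = t + 1/t"
        have b1: "t - 1 < (s0-2)/2" "1/t - 1 < (s0-2)/2" using a1 a2 abs_less_iff by blast+
        have lin: "x + y < s0" if "x - 1 < (s0-2)/2" "y - 1 < (s0-2)/2" for x y :: real
          using that by simp
        have ss: "s < s0" unfolding s_def using lin[OF b1] .
        have s2': "s \<ge> 2" using s2 q(1) unfolding s_def t_def by simp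
        have "s^2 \<le> s0^2" using ss s2' by (intro power_mono) auto
        have e3: "3* s0^2 - (s0^2 + 2 * s0 + 4) = 2*((s0-2)*(s0+1))" by (simp add: algebra_simps power2_eq_square)
        have "(s0-2)*(s0+1) \<ge> 0" using s0g by simp
        hence X: "s^2 + 2 * s + 4 \<le> 3* s0^2" using e3 ss \<open>s^2 \<le> s0^2\<close> by linarith
        have "C - b/4*(s^2 + 2 * s + 4) = b/4 * (3* s0^2 - (s^2 + 2 * s + 4))" unfolding Cs0 by (simp add: algebra_simps)
        moreover have "b/4 * (3* s0^2 - (s^2 + 2 * s + 4)) \<ge> 0" using b0 X by simp
        ultimately have "C - b/4*(s^2 + 2 * s + 4) \<ge> 0" by simp
        hence "F s - F 2 \<ge> 0" unfolding F2 using s2' by simp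
        moreover have "scal c d q = F s" using qsc unfolding s_def t_def .
        moreover have "scal c d (1,1) = F 2" using sc[of 1] by simp
        ultimately show "scal c d (1,1) \<le> scal c d q" by simp
      qed
    qed
    have lmax: "local_max_M1 c d g" if "global_max_M1 c d g" for g
      using that unfolding global_max_M1_def local_max_M1_def by (auto intro: exI[of _ 1])
    have ne: "g1 \<noteq> g2" "g1 \<noteq> (1,1)" "g2 \<noteq> (1,1)" unfolding g1_def g2_def using t0p r0 dif by auto
    have G1: "global_max_M1 c d g1" and G2: "global_max_M1 c d g2" using gmax by auto
    have nc: "{p. crit_point c d p} \<noteq> {(1,1)}" using crit ne by blast
    show ?thesis
    proof (intro conjI impI)
      show "global_max_M1 c d (1, 1) \<longleftrightarrow> {p. crit_point c d p} = {(1, 1)}" using ngm nc by blast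
      show "local_min_M1 c d (1, 1)" by (rule lmin)
      show "\<exists>g1 g2. g1 \<noteq> g2 \<and> g1 \<noteq> (1, 1) \<and> g2 \<noteq> (1, 1) \<and>
               {p. crit_point c d p} = {(1, 1), g1, g2} \<and>
               local_max_M1 c d g1 \<and> local_max_M1 c d g2 \<and>
               (global_max_M1 c d g1 \<or> global_max_M1 c d g2)"
        using ne crit lmax[OF G1] lmax[OF G2] G1 by blast
    qed
  qed
qed

end
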